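(* Fix $\zeta\in\mathbb{R}$ and $\omega\in\mathbb{C}$ with $0<\operatorname{Im}\omega<1/2$, and for $-1/2<\operatorname{Im} t<0$ let $$f(t) = - \frac{\operatorname{Li}_{2}(-e^{2\pi \zeta})+\operatorname{Li}_{2}(-e^{2\pi (t-\zeta)})-\operatorname{Li}_{2}(-e^{2\pi (t + \frac{i}{2})})}{2 \pi i} + i \pi \zeta^2 +2 i \pi t \omega +\pi t+\frac{i \pi }{6},\qquad g(t) = e^{\pi t-\frac{1}{2} \ln \left(1-e^{2 \pi t}\right)}.$$ Writing $t=t_1+it_2$, there are constants $C>0$ and $c>0$ such that $$\big|e^{f(t)/b^2} g(t)\big| \leq C e^{-\frac{c}{b^2}|t_1|}$$ for all sufficiently large $|t_1|$, all $t_2\in(-1/2,0)$, and all sufficiently small $b>0$.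
   Context: Principal branches: $\operatorname{Im}\ln z\in(-\pi,\pi]$ and $\operatorname{Li}_2(z)=-\int_0^z\frac{\ln(1-u)}{u}du$ for $z\in\mathbb{C}\setminus[1,\infty)$. *)

theory Defs
  imports "HOL-Complex_Analysis.Complex_Analysis"
begin

text \<open>Principal dilogarithm: Li2 z = - integral from 0 to z (along the straight segment)
  of Ln(1-u)/u, with the principal branch Ln (Im in (-pi,pi]). For z not in [1,infinity)
  the segment avoids the branch cut. At u = 0 the integrand value is irrelevant
  (a single point; in HOL Ln 1 / 0 = 0 anyway).\<close>
definition Li2 :: "complex \<Rightarrow> complex" where
  "Li2 z = - contour_integral (linepath 0 z) (\<lambda>u. Ln (1 - u) / u)"

definition f_fun :: "real \<Rightarrow> complex \<Rightarrow> complex \<Rightarrow> complex" where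
  "f_fun \<zeta> \<omega> t =
     - (Li2 (- exp (2 * of_real pi * of_real \<zeta>))
        + Li2 (- exp (2 * of_real pi * (t - of_real \<zeta>)))
        - Li2 (- exp (2 * of_real pi * (t + \<i> / 2)))) / (2 * of_real pi * \<i>)
     + \<i> * of_real pi * (of_real \<zeta>)\<^sup>2 + 2 * \<i> * of_real pi * t * \<omega>
     + of_real pi * t + \<i> * of_real pi / 6"

definition g_fun :: "complex \<Rightarrow> complex" where
  "g_fun t = exp (of_real pi * t - Ln (1 - exp (2 * of_real pi * t)) / 2)"

end

theory Submission
  imports Defs
begin


definition slit :: "complex set" where "slit = {z. Im z \<noteq> 0} \<union> {z. Re z < 1}"

definition GG :: "complex \<Rightarrow> complex" where
  "GG u = (if u = 0 then -1 else Ln (1 - u) / u)"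

lemma open_slit: "open slit"
  unfolding slit_def
  by (intro open_Un open_halfspace_Re_lt open_Collect_neq continuous_intros)

lemma slit_not_nonpos: "u \<in> slit \<Longrightarrow> 1 - u \<notin> \<real>\<^sub>\<le>\<^sub>0"
  by (auto simp: slit_def complex_nonpos_Reals_iff)

lemma seg_slit: assumes "z \<in> slit" shows "closed_segment 0 z \<subseteq> slit"
proof
  fix y assume "y \<in> closed_segment 0 z"
  then obtain u where u: "0 \<le> u" "u \<le> 1" "y = u *\<^sub>R z" by (auto simp: closed_segment_def)
  show "y \<in> slit"
  proof (cases "Im z = 0")
    case True
    then have "Re z < 1" using assms by (auto simp: slit_def)
    have a: "u * Re z \<le> u * max 0 (Re z)" by (rule mult_left_mono) (use u in auto)
    have b: "u * max 0 (Re z) \<le> max 0 (Re z)" by (rule mult_left_le_one_le) (use u in auto)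
    have "Re y = u * Re z" by (simp add: u(3))
    then have "Re y < 1" using a b \<open>Re z < 1\<close> by linarith
    then show ?thesis by (simp add: slit_def)
  next
    case False
    show ?thesis
    proof (cases "u = 0")
      case True then show ?thesis using u by (simp add: slit_def)
    next
      case False then show ?thesis using u \<open>Im z \<noteq> 0\<close> by (simp add: slit_def)
    qed
  qed
qed

lemma starlike_slit: "starlike slit"
  unfolding starlike_def using seg_slit by (intro bexI[of _ 0]) (auto simp: slit_def)

lemma GG_cont0: "isCont GG 0"
proof -
  have d: "((\<lambda>u. Ln (1 - u)) has_field_derivative -1) (at 0)"
    by (rule derivative_eq_intros refl | simp)+
  then have "((\<lambda>y. (Ln (1 - y) - Ln (1 - 0)) / (y - 0)) \<longlongrightarrow> -1) (at 0)"
    using d[unfolded has_field_derivative_iff] by simp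
  then have "((\<lambda>y. Ln (1 - y) / y) \<longlongrightarrow> -1) (at 0)" by simp
  moreover have "\<forall>\<^sub>F y in at 0. Ln (1 - y) / y = GG y"
    by (auto simp: eventually_at_filter GG_def)
  ultimately have "(GG \<longlongrightarrow> -1) (at 0)" by (rule Lim_transform_eventually)
  then show ?thesis by (simp add: isCont_def GG_def)
qed

lemma GG_diff: assumes "x \<in> slit" "x \<noteq> 0" shows "GG field_differentiable at x"
proof -
  have "(\<lambda>u. Ln (1 - u) / u) field_differentiable at x"
    using assms slit_not_nonpos[OF assms(1)]
    by (auto intro!: derivative_intros field_differentiable_divide field_differentiable_diff
          field_differentiable_compose[OF _ field_differentiable_at_Ln, unfolded o_def])
  then show ?thesis
    by (rule field_differentiable_transform_within[of "norm x" _ UNIV, rotated 3])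
       (use assms in \<open>auto simp: GG_def dist_norm\<close>)
qed

lemma GG_contS: "continuous_on slit GG"
proof -
  have "isCont GG x" if "x \<in> slit" for x
  proof (cases "x = 0")
    case True then show ?thesis using GG_cont0 by simp
  next
    case False then show ?thesis using GG_diff[OF that False]
      by (simp add: field_differentiable_imp_continuous_at)
  qed
  then show ?thesis using open_slit by (simp add: continuous_on_eq_continuous_at)
qed

lemma primitive_ex: "\<exists>gp. \<forall>x\<in>slit. (gp has_field_derivative GG x) (at x)"
  by (rule holomorphic_starlike_primitive[OF GG_contS starlike_slit open_slit, of "{0}"])
     (auto intro: GG_diff)


lemma Li2_prim:
  assumes gp: "\<forall>x\<in>slit. (gp has_field_derivative GG x) (at x)" and z: "z \<in> slit"
  shows "Li2 z = gp 0 - gp z"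
proof (cases "z = 0")
  case True then show ?thesis by (simp add: Li2_def)
next
  case False
  have "(GG has_contour_integral (gp (pathfinish (linepath 0 z)) - gp (pathstart (linepath 0 z)))) (linepath 0 z)"
    by (rule contour_integral_primitive[of slit, OF _ valid_path_linepath])
       (use gp seg_slit[OF z] in \<open>auto intro: has_field_derivative_at_within simp del: linepath_0\<close>)
  then have "(GG has_contour_integral (gp z - gp 0)) (linepath 0 z)" by simp
  then have "((\<lambda>u. Ln (1 - u) / u) has_contour_integral (gp z - gp 0)) (linepath 0 z)"
    unfolding has_contour_integral_def
  proof (rule has_integral_spike_finite[of "{0}", rotated 2])
    fix x assume "x \<in> {0..1::real} - {0}"
    then show "Ln (1 - linepath 0 z x) / linepath 0 z x * vector_derivative (linepath 0 z) (at x within {0..1}) =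
        GG (linepath 0 z x) * vector_derivative (linepath 0 z) (at x within {0..1})"
      using False by (auto simp: GG_def linepath_def)
  qed simp
  then have "contour_integral (linepath 0 z) (\<lambda>u. Ln (1 - u) / u) = gp z - gp 0"
    by (rule contour_integral_unique)
  then show ?thesis unfolding Li2_def by simp
qed

lemma Li2_deriv:
  assumes z: "z \<in> slit" shows "(Li2 has_field_derivative (- GG z)) (at z)"
proof -
  obtain gp where gp: "\<forall>x\<in>slit. (gp has_field_derivative GG x) (at x)" using primitive_ex by blast
  have d: "(gp has_field_derivative GG z) (at z)" using gp z by blast
  have "((\<lambda>z. gp 0 - gp z) has_field_derivative (0 - GG z)) (at z)"
    by (rule DERIV_diff[OF DERIV_const d])
  then have "((\<lambda>z. gp 0 - gp z) has_field_derivative (- GG z)) (at z)" by simp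
  then show ?thesis
    by (rule has_field_derivative_transform_within_open[OF _ open_slit z])
       (simp add: Li2_prim[OF gp])
qed

lemma Li2_small: assumes "norm z < 1/2" shows "norm (Li2 z) \<le> 2 * norm z"
proof (cases "(\<lambda>u. Ln (1 - u) / u) contour_integrable_on (linepath 0 z)")
  case True
  have "norm (contour_integral (linepath 0 z) (\<lambda>u. Ln (1 - u) / u)) \<le> 2 * norm (z - 0)"
  proof (rule contour_integral_bound_linepath[OF True])
    fix x assume "x \<in> closed_segment 0 z"
    then have nx: "norm x \<le> norm z"
      by (auto simp: closed_segment_def mult_left_le_one_le)
    show "norm (Ln (1 - x) / x) \<le> 2"
    proof (cases "x = 0")
      case False
      have "norm (Ln (1 + (-x))) \<le> 2 * norm (-x)"
        by (rule norm_Ln_le) (use nx assms in simp)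
      then show ?thesis using False by (simp add: norm_divide field_simps)
    qed simp
  qed simp
  then show ?thesis by (simp add: Li2_def)
next
  case False
  then show ?thesis by (simp add: Li2_def not_integrable_contour_integral)
qed



lemma Im_Ln_sign_pos: "0 < Im z \<Longrightarrow> 0 < Im (Ln z)"
  using Im_Ln_pos_lt_imp by blast

lemma Im_Ln_sign_neg: assumes "Im z < 0" shows "Im (Ln z) < 0"
proof -
  have "z \<noteq> 0" using assms by auto
  then show ?thesis using assms Arg_neg_iff Arg_eq_Im_Ln by metis
qed

lemma Im_exp_sign:
  fixes \<xi> :: complex
  assumes "-pi < Im \<xi>" "Im \<xi> < pi"
  shows "Im \<xi> > 0 \<Longrightarrow> Im (exp \<xi>) > 0" and "Im \<xi> < 0 \<Longrightarrow> Im (exp \<xi>) < 0"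
proof -
  assume "Im \<xi> > 0"
  then show "Im (exp \<xi>) > 0" using assms by (simp add: Im_exp sin_gt_zero)
next
  assume "Im \<xi> < 0"
  then have "0 < sin (- Im \<xi>)" using assms by (intro sin_gt_zero) auto
  then show "Im (exp \<xi>) < 0" by (simp add: Im_exp mult_pos_neg)
qed

lemma Im_Ln_one_plus_exp:
  fixes \<xi> :: complex and \<delta> :: real
  assumes "-pi < Im \<xi>" "Im \<xi> < pi" "Im \<xi> \<noteq> 0"
    and d: "norm (1 / exp \<xi>) \<le> \<delta>" "\<delta> \<le> 1/4"
  shows "\<bar>Im (Ln (1 + exp \<xi>)) - Im \<xi>\<bar> \<le> 2 * \<delta>"
proof -
  let ?u = "exp \<xi>"
  have u0: "?u \<noteq> 0" by simp
  have w0: "1 + 1 / ?u \<noteq> 0"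
  proof
    assume "1 + 1 / ?u = 0"
    then have "1 / ?u = -1" by (simp add: add_eq_0_iff)
    then have "norm (1 / ?u) = 1" by simp
    then show False using d by simp
  qed
  have eq: "1 + ?u = ?u * (1 + 1 / ?u)" using u0 by (simp add: field_simps)
  have Lnu: "Ln ?u = \<xi>" using assms by simp
  have "norm (Ln (1 + 1 / ?u)) \<le> 2 * norm (1 / ?u)"
    by (rule norm_Ln_le) (use d in simp)
  then have eta: "\<bar>Im (Ln (1 + 1 / ?u))\<bar> \<le> 2 * \<delta>"
    using abs_Im_le_cmod[of "Ln (1 + 1 / ?u)"] d by linarith
  have sgn: "(Im \<xi> > 0 \<longrightarrow> Im (Ln (1 + ?u)) > 0) \<and> (Im \<xi> < 0 \<longrightarrow> Im (Ln (1 + ?u)) < 0)"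
    using Im_exp_sign[OF assms(1,2)] Im_Ln_sign_pos Im_Ln_sign_neg by auto
  have pi3: "pi > 3" by (rule pi_gt3)
  have "Ln (1 + ?u) = Ln (?u * (1 + 1 / ?u))" using eq by simp
  also have "\<dots> = Ln ?u + Ln (1 + 1 / ?u)"
  proof -
    have "Ln (?u * (1 + 1 / ?u)) =
           (if Im(Ln ?u + Ln (1 + 1 / ?u)) \<le> -pi then (Ln ?u + Ln (1 + 1 / ?u)) + \<i> * of_real(2*pi)
            else if Im(Ln ?u + Ln (1 + 1 / ?u)) > pi then (Ln ?u + Ln (1 + 1 / ?u)) - \<i> * of_real(2*pi)
            else Ln ?u + Ln (1 + 1 / ?u))" by (rule Ln_times[OF u0 w0])
    moreover have "\<not> Im(Ln ?u + Ln (1 + 1 / ?u)) \<le> -pi"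
    proof
      assume a: "Im(Ln ?u + Ln (1 + 1 / ?u)) \<le> -pi"
      then have "Im \<xi> < 0" using Lnu eta d pi3 by (auto simp: abs_le_iff)
      moreover have "Ln (?u * (1 + 1 / ?u)) = (Ln ?u + Ln (1 + 1 / ?u)) + \<i> * of_real(2*pi)"
        using a \<open>Ln (?u * (1 + 1 / ?u)) = _\<close> by simp
      ultimately show False using sgn eq Lnu eta d a assms(1) pi3 by (auto simp: abs_le_iff)
    qed
    moreover have "\<not> Im(Ln ?u + Ln (1 + 1 / ?u)) > pi"
    proof
      assume a: "Im(Ln ?u + Ln (1 + 1 / ?u)) > pi"
      then have "Im \<xi> > 0" using Lnu eta d pi3 by (auto simp: abs_le_iff)
      moreover have "Ln (?u * (1 + 1 / ?u)) = (Ln ?u + Ln (1 + 1 / ?u)) - \<i> * of_real(2*pi)"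
        using a \<open>Ln (?u * (1 + 1 / ?u)) = _\<close> pi_gt_zero by auto
      ultimately show False using sgn eq Lnu eta d a assms(2) pi3 by (auto simp: abs_le_iff)
    qed
    ultimately show ?thesis by simp
  qed
  finally have "Im (Ln (1 + ?u)) = Im \<xi> + Im (Ln (1 + 1 / ?u))" using Lnu by simp
  then show ?thesis using eta by simp
qed



definition Phi :: "real \<Rightarrow> complex \<Rightarrow> complex" where
  "Phi \<zeta> t = Li2 (- exp (2 * of_real pi * (t - of_real \<zeta>))) - Li2 (- exp (2 * of_real pi * (t + \<i> / 2)))"

definition dPhi :: "real \<Rightarrow> complex \<Rightarrow> complex" where
  "dPhi \<zeta> t = 2 * of_real pi * Ln (1 + exp (2 * of_real pi * (t + \<i> / 2)))
             - 2 * of_real pi * Ln (1 + exp (2 * of_real pi * (t - of_real \<zeta>)))"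

lemma Im_B_arg: "Im (2 * of_real pi * (t - of_real \<zeta>)) = 2 * pi * Im t" by simp
lemma Im_D_arg: "Im (2 * of_real pi * (t + \<i> / 2)) = 2 * pi * Im t + pi" by (simp add: algebra_simps)

lemma pi_range: assumes "-1/2 < x" "x < 0"
  shows "-pi < 2*pi*x" "pi*x < 0" "0 < pi + pi*(x*2)" "0 < pi * 2 + pi * (x * 2)" "2*pi*x + pi < pi"
proof -
  have a: "pi * x < 0" using assms by (simp add: mult_pos_neg)
  have "pi*(-1/2) < pi * x" by (rule mult_strict_left_mono) (use assms in simp_all)
  then show "-pi < 2*pi*x" "pi*x < 0" "0 < pi + pi*(x*2)" "0 < pi * 2 + pi * (x * 2)" "2*pi*x + pi < pi"
    using a pi_gt_zero by linarith+
qed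

lemma zB_slit: assumes "-1/2 < Im t" "Im t < 0" shows "- exp (2 * of_real pi * (t - of_real \<zeta>)) \<in> slit"
proof -
  have "Im (exp (2 * of_real pi * (t - of_real \<zeta>))) < 0"
    by (rule Im_exp_sign(2); unfold Im_B_arg; use pi_range[OF assms] pi_gt_zero in linarith)
  then show ?thesis by (simp add: slit_def)
qed

lemma zD_slit: assumes "-1/2 < Im t" "Im t < 0" shows "- exp (2 * of_real pi * (t + \<i> / 2)) \<in> slit"
proof -
  have "Im (exp (2 * of_real pi * (t + \<i> / 2))) > 0"
    by (rule Im_exp_sign(1); unfold Im_D_arg; use pi_range[OF assms] pi_gt_zero in linarith)
  then show ?thesis by (simp add: slit_def)
qed

lemma GG_mult: "z \<noteq> 0 \<Longrightarrow> - GG z * (z * k) = - (k * Ln (1 - z))"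
  by (simp add: GG_def)

lemma Li2_comp_deriv:
  assumes "- exp (2 * of_real pi * (t + c)) \<in> slit"
  shows "((\<lambda>t. Li2 (- exp (2 * of_real pi * (t + c)))) has_field_derivative
           - (2 * of_real pi * Ln (1 + exp (2 * of_real pi * (t + c))))) (at t)"
proof -
  have d1: "((\<lambda>t. - exp (2 * of_real pi * (t + c))) has_field_derivative
              (- exp (2 * of_real pi * (t + c)) * (2 * of_real pi))) (at t)"
    by (rule derivative_eq_intros refl | simp)+
  have d2: "((\<lambda>t. Li2 (- exp (2 * of_real pi * (t + c)))) has_field_derivative
           (- GG (- exp (2 * of_real pi * (t + c)))) * (- exp (2 * of_real pi * (t + c)) * (2 * of_real pi))) (at t)"
    by (rule DERIV_chain2[OF Li2_deriv[OF assms] d1])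
  have eq: "(- GG (- exp (2 * of_real pi * (t + c)))) * (- exp (2 * of_real pi * (t + c)) * (2 * of_real pi))
      = - (2 * of_real pi * Ln (1 + exp (2 * of_real pi * (t + c))))"
    by (subst GG_mult) simp_all
  show ?thesis using d2 unfolding eq .
qed

lemma Phi_deriv:
  assumes "-1/2 < Im t" "Im t < 0"
  shows "(Phi \<zeta> has_field_derivative dPhi \<zeta> t) (at t)"
proof -
  have a: "((\<lambda>t. Li2 (- exp (2 * of_real pi * (t + (- of_real \<zeta>))))) has_field_derivative
           - (2 * of_real pi * Ln (1 + exp (2 * of_real pi * (t + (- of_real \<zeta>)))))) (at t)"
    by (rule Li2_comp_deriv) (use zB_slit[OF assms, of \<zeta>] in simp)
  have b: "((\<lambda>t. Li2 (- exp (2 * of_real pi * (t + \<i> / 2)))) has_field_derivative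
           - (2 * of_real pi * Ln (1 + exp (2 * of_real pi * (t + \<i> / 2))))) (at t)"
    by (rule Li2_comp_deriv) (use zD_slit[OF assms] in simp)
  have "((\<lambda>t. Li2 (- exp (2 * of_real pi * (t + (- of_real \<zeta>)))) - Li2 (- exp (2 * of_real pi * (t + \<i> / 2))))
     has_field_derivative (- (2 * of_real pi * Ln (1 + exp (2 * of_real pi * (t + (- of_real \<zeta>)))))
          - - (2 * of_real pi * Ln (1 + exp (2 * of_real pi * (t + \<i> / 2)))))) (at t)"
    by (rule DERIV_diff[OF a b])
  moreover have "Phi \<zeta> = (\<lambda>t. Li2 (- exp (2 * of_real pi * (t + (- of_real \<zeta>)))) - Li2 (- exp (2 * of_real pi * (t + \<i> / 2))))"
    by (simp add: Phi_def fun_eq_iff)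
  ultimately show ?thesis by (simp add: dPhi_def)
qed

lemma h_deriv:
  assumes "-1/2 < t2" "t2 < 0"
  shows "((\<lambda>s. Im (Phi \<zeta> (Complex s t2))) has_real_derivative Im (dPhi \<zeta> (Complex s t2))) (at s)"
proof -
  have "((\<lambda>z. Phi \<zeta> (z + \<i> * of_real t2)) has_field_derivative dPhi \<zeta> (of_real s + \<i> * of_real t2) * 1)
        (at (of_real s))"
    by (rule DERIV_chain2[OF Phi_deriv]) (use assms in \<open>auto intro!: derivative_eq_intros\<close>)
  then have "((\<lambda>x. Phi \<zeta> (of_real x + \<i> * of_real t2)) has_vector_derivative dPhi \<zeta> (of_real s + \<i> * of_real t2))
        (at s)"
    using has_vector_derivative_real_field by fastforce
  then have "((\<lambda>x. Im (Phi \<zeta> (of_real x + \<i> * of_real t2))) has_field_derivative Im (dPhi \<zeta> (of_real s + \<i> * of_real t2)))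
        (at s)"
    by (rule has_field_derivative_Im)
  then show ?thesis by (simp add: Complex_eq)
qed



lemma norm_inv_exp: "norm (1 / exp (\<xi>::complex)) = exp (- Re \<xi>)"
  by (simp add: norm_divide exp_minus inverse_eq_divide)

lemma Im_dPhi: "Im (dPhi \<zeta> t) = 2 * pi * (Im (Ln (1 + exp (2 * of_real pi * (t + \<i> / 2))))
     - Im (Ln (1 + exp (2 * of_real pi * (t - of_real \<zeta>)))))"
  by (simp add: dPhi_def algebra_simps)

lemma dPhi_nonneg:
  assumes "-1/2 < t2" "t2 < 0"
  shows "0 \<le> Im (dPhi \<zeta> (Complex s t2))"
proof -
  let ?t = "Complex s t2"
  have r: "-1/2 < Im ?t" "Im ?t < 0" using assms by simp_all
  have p: "Im (exp (2 * of_real pi * (?t + \<i> / 2))) > 0"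
    by (rule Im_exp_sign(1); unfold Im_D_arg; use pi_range[OF r] pi_gt_zero in linarith)
  have n: "Im (exp (2 * of_real pi * (?t - of_real \<zeta>))) < 0"
    by (rule Im_exp_sign(2); unfold Im_B_arg; use pi_range[OF r] pi_gt_zero in linarith)
  have "0 < Im (Ln (1 + exp (2 * of_real pi * (?t + \<i> / 2))))"
    by (rule Im_Ln_sign_pos) (use p in simp)
  moreover have "Im (Ln (1 + exp (2 * of_real pi * (?t - of_real \<zeta>)))) < 0"
    by (rule Im_Ln_sign_neg) (use n in simp)
  ultimately show ?thesis unfolding Im_dPhi by simp
qed

lemma dPhi_big:
  assumes "-1/2 < t2" "t2 < 0" and d: "exp (- (2 * pi * s)) \<le> \<delta>" "exp (- (2 * pi * (s - \<zeta>))) \<le> \<delta>" "\<delta> \<le> 1/4"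
  shows "2 * pi * (pi - 4 * \<delta>) \<le> Im (dPhi \<zeta> (Complex s t2))"
proof -
  let ?t = "Complex s t2"
  have r: "-1/2 < Im ?t" "Im ?t < 0" using assms by simp_all
  have 1: "\<bar>Im (Ln (1 + exp (2 * of_real pi * (?t + \<i> / 2)))) - Im (2 * of_real pi * (?t + \<i> / 2))\<bar> \<le> 2 * \<delta>"
  proof (rule Im_Ln_one_plus_exp)
    show "norm (1 / exp (2 * of_real pi * (?t + \<i> / 2))) \<le> \<delta>"
      unfolding norm_inv_exp using d by simp
    have iX: "Im (2 * of_real pi * (?t + \<i> / 2)) = 2 * pi * t2 + pi" by (simp add: Im_D_arg algebra_simps)
    show "-pi < Im (2 * of_real pi * (?t + \<i> / 2))" unfolding iX using pi_range[OF r] pi_gt_zero by simp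
    show "Im (2 * of_real pi * (?t + \<i> / 2)) < pi" unfolding iX using pi_range[OF r] pi_gt_zero by simp
    show "Im (2 * of_real pi * (?t + \<i> / 2)) \<noteq> 0" unfolding iX using pi_range[OF r] pi_gt_zero by simp
  qed (rule d(3))
  have 2: "\<bar>Im (Ln (1 + exp (2 * of_real pi * (?t - of_real \<zeta>)))) - Im (2 * of_real pi * (?t - of_real \<zeta>))\<bar> \<le> 2 * \<delta>"
  proof (rule Im_Ln_one_plus_exp)
    show "norm (1 / exp (2 * of_real pi * (?t - of_real \<zeta>))) \<le> \<delta>"
      unfolding norm_inv_exp using d by simp
    have iX: "Im (2 * of_real pi * (?t - of_real \<zeta>)) = 2 * pi * t2" by (simp add: Im_B_arg)
    show "-pi < Im (2 * of_real pi * (?t - of_real \<zeta>))" unfolding iX using pi_range[OF r] pi_gt_zero by simp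
    show "Im (2 * of_real pi * (?t - of_real \<zeta>)) < pi" unfolding iX using pi_range[OF r] pi_gt_zero using assms by simp
    show "Im (2 * of_real pi * (?t - of_real \<zeta>)) \<noteq> 0" unfolding iX using pi_range[OF r] pi_gt_zero using assms by simp
  qed (rule d(3))
  have iD: "Im (2 * of_real pi * (?t + \<i> / 2)) = 2 * pi * t2 + pi" by (simp add: Im_D_arg algebra_simps)
  have iB: "Im (2 * of_real pi * (?t - of_real \<zeta>)) = 2 * pi * t2" by (simp add: Im_B_arg)
  have "pi - 4 * \<delta> \<le> Im (Ln (1 + exp (2 * of_real pi * (?t + \<i> / 2))))
     - Im (Ln (1 + exp (2 * of_real pi * (?t - of_real \<zeta>))))"
    using 1 2 unfolding iD iB abs_le_iff by linarith
  then show ?thesis unfolding Im_dPhi by (rule mult_left_mono) simp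
qed

lemma exp_m2pi: "exp (- (2 * pi)) < 1/2"
proof -
  have "1 + 2 * pi \<le> exp (2 * pi)" by (rule exp_ge_add_one_self)
  then have "2 < exp (2 * pi)" using pi_gt3 by linarith
  then show ?thesis by (simp add: exp_minus field_simps)
qed

lemma h_small:
  assumes "s \<le> - \<bar>\<zeta>\<bar> - 1"
  shows "\<bar>Im (Phi \<zeta> (Complex s t2))\<bar> \<le> 2"
proof -
  let ?t = "Complex s t2"
  have e1: "norm (- exp (2 * of_real pi * (?t - of_real \<zeta>))) < 1/2"
  proof -
    have "2 * pi * (s - \<zeta>) \<le> - (2 * pi)"
      using assms mult_left_mono[of "s - \<zeta>" "-1" "2*pi"] pi_gt_zero by (auto simp: abs_if split: if_splits)
    then have a: "exp (2 * pi * (s - \<zeta>)) \<le> exp (- (2 * pi))" by (simp only: exp_le_cancel_iff)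
    have n: "norm (- exp (2 * of_real pi * (?t - of_real \<zeta>))) = exp (2 * pi * (s - \<zeta>))" by simp
    show ?thesis unfolding n using a exp_m2pi by linarith
  qed
  have e2: "norm (- exp (2 * of_real pi * (?t + \<i> / 2))) < 1/2"
  proof -
    have "2 * pi * s \<le> - (2 * pi)"
      using assms mult_left_mono[of "s" "-1" "2*pi"] pi_gt_zero by (auto simp: abs_if split: if_splits)
    then have a: "exp (2 * pi * s) \<le> exp (- (2 * pi))" by (simp only: exp_le_cancel_iff)
    have n: "norm (- exp (2 * of_real pi * (?t + \<i> / 2))) = exp (2 * pi * s)" by simp
    show ?thesis unfolding n using a exp_m2pi by linarith
  qed
  have "norm (Phi \<zeta> ?t) \<le> norm (Li2 (- exp (2 * of_real pi * (?t - of_real \<zeta>)))) + norm (Li2 (- exp (2 * of_real pi * (?t + \<i> / 2))))"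
    unfolding Phi_def by (rule norm_triangle_ineq4)
  also have "\<dots> \<le> 2 * (1/2) + 2 * (1/2)"
    using Li2_small[OF e1] Li2_small[OF e2] e1 e2 by linarith
  finally show ?thesis using abs_Im_le_cmod[of "Phi \<zeta> ?t"] by linarith
qed



lemma Re_div_2pii: "Re (- X / (2 * of_real pi * \<i>)) = - Im X / (2 * pi)"
  by (simp add: Re_divide power2_eq_square field_simps)

lemma Re_f: "Re (f_fun \<zeta> \<omega> t) = - (Im (Li2 (- exp (2 * of_real pi * of_real \<zeta>))) + Im (Phi \<zeta> t)) / (2*pi)
   - 2*pi*Im(t*\<omega>) + pi * Re t"
proof -
  have "Re (f_fun \<zeta> \<omega> t) = Re (- (Li2 (- exp (2 * of_real pi * of_real \<zeta>))
        + Li2 (- exp (2 * of_real pi * (t - of_real \<zeta>)))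
        - Li2 (- exp (2 * of_real pi * (t + \<i> / 2)))) / (2 * of_real pi * \<i>))
     + Re (\<i> * of_real pi * (of_real \<zeta>)\<^sup>2) + Re (2 * \<i> * of_real pi * t * \<omega>)
     + Re (of_real pi * t) + Re (\<i> * of_real pi / 6)"
    by (simp add: f_fun_def)
  also have "\<dots> = - (Im (Li2 (- exp (2 * of_real pi * of_real \<zeta>))) + Im (Phi \<zeta> t)) / (2*pi)
   - 2*pi*Im(t*\<omega>) + pi * Re t"
    unfolding Re_div_2pii using pi_gt_zero by (simp add: Phi_def power2_eq_square) (simp add: field_simps)
  finally show ?thesis .
qed

lemma g_bound:
  assumes "1 \<le> \<bar>t1\<bar>"
  shows "norm (g_fun (Complex t1 t2)) \<le> 2"
proof -
  let ?t = "Complex t1 t2"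
  let ?v = "exp (2 * of_real pi * ?t)"
  let ?n = "norm (1 - ?v)"
  let ?e = "exp (2 * pi * t1)"
  have nv: "norm ?v = ?e" by simp
  have tri: "\<bar>1 - ?e\<bar> \<le> ?n" using norm_triangle_ineq3[of 1 ?v] nv by simp
  have ee: "?e / ?n \<le> 4 \<and> 0 < ?n"
  proof (cases "t1 \<ge> 1")
    case True
    have "1 + 2 * pi * t1 \<le> ?e" by (rule exp_ge_add_one_self)
    moreover have "2 * pi * 1 \<le> 2 * pi * t1" using True by simp
    ultimately have e2: "2 \<le> ?e" using pi_gt3 by linarith
    then have n: "?e / 2 \<le> ?n" using tri by linarith
    have n0: "0 < ?n" using n e2 by linarith
    have "?e / ?n \<le> ?e / (?e / 2)" using e2 n
      by (intro divide_left_mono) (auto intro!: mult_pos_pos n0)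
    moreover have "?e / (?e / 2) = 2" using e2 by simp
    moreover note n0
    ultimately show ?thesis by linarith
  next
    case False
    then have t: "t1 \<le> -1" using assms by linarith
    have "2 * pi * t1 \<le> 2 * pi * (-1)" using mult_left_mono[OF t, of "2*pi"] by simp
    then have "?e \<le> exp (- (2 * pi))" by simp
    then have e2: "?e \<le> 1/2" using exp_m2pi by linarith
    then have n: "1/2 \<le> ?n" using tri by linarith
    have "?e / ?n \<le> (1/2) / (1/2)"
      by (rule frac_le) (use e2 n in auto)
    then show ?thesis using n by auto
  qed
  let ?y = "pi * t1 - ln ?n / 2"
  have re: "Re (of_real pi * ?t - Ln (1 - ?v) / 2) = ?y"
    using ee by simp
  have "exp ?y ^ 2 = exp (2 * pi * t1 - ln ?n)"
    by (simp add: exp_double[symmetric] power2_eq_square exp_add[symmetric] algebra_simps)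
  also have "\<dots> = ?e / ?n" using ee by (simp add: exp_diff)
  also have "\<dots> \<le> 2 ^ 2" using ee by simp
  finally have "exp ?y \<le> 2" by (rule power2_le_imp_le) simp
  then show ?thesis unfolding g_fun_def by (simp only: norm_exp_eq_Re re)
qed



lemma exp_small: fixes \<delta> y :: real assumes "0 < \<delta>" "1/\<delta> \<le> y" shows "exp (- y) \<le> \<delta>"
proof -
  have "1 + y \<le> exp y" by (rule exp_ge_add_one_self)
  then have "1/\<delta> \<le> exp y" using assms by linarith
  then have "1 / exp y \<le> 1 / (1/\<delta>)" using assms by (intro divide_left_mono) auto
  then show ?thesis using assms by (simp add: exp_minus inverse_eq_divide)
qed

lemma key_bound:
  fixes \<zeta> :: real and \<omega> :: complex
  assumes a0: "0 < Im \<omega>" "Im \<omega> < 1/2"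
  defines "a \<equiv> Im \<omega>"
  defines "\<delta> \<equiv> min (1/4) (pi * a / 4)"
  defines "S1 \<equiv> \<bar>\<zeta>\<bar> + 1/\<delta>"
  defines "A \<equiv> Li2 (- exp (2 * of_real pi * of_real \<zeta>))"
  defines "K \<equiv> norm A / (2*pi) + 1 + pi * S1 + pi * \<bar>Re \<omega>\<bar>"
  defines "c \<equiv> min (pi * a) (pi * (1 - 2*a)) / 2"
  assumes t1: "max (S1 + 1) (max (\<bar>\<zeta>\<bar> + 1) (K / c)) \<le> \<bar>t1\<bar>" and t2: "-1/2 < t2" "t2 < 0"
  shows "Re (f_fun \<zeta> \<omega> (Complex t1 t2)) \<le> - c * \<bar>t1\<bar>"
proof -
  have pa: "0 < pi * a" using a0 by (simp add: a_def)
  have pa2: "0 < pi * (1 - 2*a)" using a0 by (simp add: a_def)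
  have \<delta>0: "0 < \<delta>" "\<delta> \<le> 1/4" "4*\<delta> \<le> pi*a" using pa by (auto simp: \<delta>_def)
  have c0: "0 < c" "2*c \<le> pi*a" "2*c \<le> pi*(1-2*a)" using pa pa2 by (auto simp: c_def)
  have S1: "0 \<le> S1" using \<delta>0 by (simp add: S1_def)
  define h where "h s = Im (Phi \<zeta> (Complex s t2))" for s
  have hd: "(h has_real_derivative Im (dPhi \<zeta> (Complex s t2))) (at s)" for s
    unfolding h_def by (rule h_deriv[OF t2])
  have Ref: "Re (f_fun \<zeta> \<omega> (Complex t1 t2)) = - (Im A + h t1) / (2*pi) - 2*pi*(t1 * a + t2 * Re \<omega>) + pi * t1"
    unfolding Re_f A_def h_def a_def by (simp add: algebra_simps)
  have "\<bar>t2 * Re \<omega>\<bar> \<le> 1/2 * \<bar>Re \<omega>\<bar>" unfolding abs_mult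
    by (rule mult_right_mono) (use t2 in auto)
  then have q1: "- (t2 * Re \<omega>) \<le> 1/2 * \<bar>Re \<omega>\<bar>" by linarith
  have "(2*pi) * (- (t2 * Re \<omega>)) \<le> (2*pi) * (1/2 * \<bar>Re \<omega>\<bar>)" by (rule mult_left_mono[OF q1]) simp
  then have tw: "- (2*pi*(t2 * Re \<omega>)) \<le> pi * \<bar>Re \<omega>\<bar>" by simp
  have "- Im A \<le> norm A" using abs_Im_le_cmod[of A] by linarith
  then have IA: "- Im A / (2*pi) \<le> norm A / (2*pi)" by (rule divide_right_mono) simp
  have "K = c * (K / c)" using c0 by simp
  also have "\<dots> \<le> c * \<bar>t1\<bar>" using t1 c0 by (intro mult_left_mono) auto
  finally have cK: "K \<le> c * \<bar>t1\<bar>" .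
  have pi1: "1/pi \<le> 1" using pi_gt3 by simp
  show ?thesis
  proof (cases "t1 \<ge> 0")
    case True
    have tS: "S1 + 1 \<le> t1" using t1 True by simp
    have big: "2*pi*(pi - 4*\<delta>) \<le> Im (dPhi \<zeta> (Complex s t2))" if s: "S1 \<le> s" for s
    proof (rule dPhi_big[OF t2])
      have s1: "1/\<delta> \<le> s" using s by (simp add: S1_def)
      have id: "0 < 1/\<delta>" using \<delta>0 by simp
      have "1 * s \<le> (2 * pi) * s" by (rule mult_right_mono; use pi_gt3 s1 id in linarith)
      then have "s \<le> 2 * pi * s" by simp
      then show "exp (- (2 * pi * s)) \<le> \<delta>" using s1 exp_small[OF \<delta>0(1)] by simp
      have s2: "1/\<delta> \<le> s - \<zeta>" using s by (simp add: S1_def abs_if split: if_splits)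
      have "1 * (s - \<zeta>) \<le> (2 * pi) * (s - \<zeta>)" by (rule mult_right_mono; use pi_gt3 s2 id in linarith)
      then have "s - \<zeta> \<le> 2 * pi * (s - \<zeta>)" by simp
      then show "exp (- (2 * pi * (s - \<zeta>))) \<le> \<delta>" using s2 exp_small[OF \<delta>0(1)] by simp
    qed (rule \<delta>0)
    obtain x where x: "S1 < x" "x < t1" "h t1 - h S1 = (t1 - S1) * Im (dPhi \<zeta> (Complex x t2))"
      using MVT2[of S1 t1 h "\<lambda>s. Im (dPhi \<zeta> (Complex s t2))"] tS hd by auto
    have "2*pi*(pi - pi*a) \<le> 2*pi*(pi - 4*\<delta>)" using \<delta>0 by simp
    also have "\<dots> \<le> Im (dPhi \<zeta> (Complex x t2))" using big x by simp
    finally have "(t1 - S1) * (2*pi*(pi - pi*a)) \<le> (t1 - S1) * Im (dPhi \<zeta> (Complex x t2))"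
      using tS by (intro mult_left_mono) auto
    then have h1: "(t1 - S1) * (2*pi*(pi - pi*a)) \<le> h t1 - h S1" using x by simp
    define s0 where "s0 = - \<bar>\<zeta>\<bar> - 1"
    obtain y where y: "s0 < y" "y < S1" "h S1 - h s0 = (S1 - s0) * Im (dPhi \<zeta> (Complex y t2))"
    proof -
      have lt: "s0 < S1" using S1 by (simp add: s0_def)
      show ?thesis using that MVT2[of s0 S1 h "\<lambda>s. Im (dPhi \<zeta> (Complex s t2))"] lt hd by blast
    qed
    have "0 \<le> (S1 - s0) * Im (dPhi \<zeta> (Complex y t2))"
      using y dPhi_nonneg[OF t2] by (intro mult_nonneg_nonneg) auto
    then have h2: "h s0 \<le> h S1" using y by simp
    have h3: "-2 \<le> h s0" using h_small[of s0 \<zeta> t2] by (simp add: s0_def h_def)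
    have hb: "2 - (t1 - S1) * (2*pi*(pi - pi*a)) \<ge> - h t1" using h1 h2 h3 by linarith
    have "- h t1 / (2*pi) \<le> (2 - (t1 - S1) * (2*pi*(pi - pi*a))) / (2*pi)"
      by (rule divide_right_mono[OF hb]) simp
    also have "\<dots> = 1/pi - (t1 - S1) * (pi - pi*a)" by (simp add: field_simps)
    finally have hc: "- h t1 / (2*pi) \<le> 1/pi - (t1 - S1) * (pi - pi*a)" .
    have E1: "- (t1 - S1) * (pi - pi*a) - 2*pi*(t1*a) + pi*t1 = pi*S1 - pi*a*S1 - pi*a*t1"
      by (simp add: algebra_simps)
    have E2: "0 \<le> pi*a*S1" using pa S1 by simp
    have E3: "2*c*t1 \<le> pi*a*t1" using c0 True by (intro mult_right_mono) auto
    have "Re (f_fun \<zeta> \<omega> (Complex t1 t2)) = - Im A / (2*pi) + - h t1 / (2*pi) - 2*pi*(t1*a) - 2*pi*(t2 * Re \<omega>) + pi * t1"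
      unfolding Ref by (simp add: field_simps)
    also have "\<dots> \<le> norm A / (2*pi) + (1/pi - (t1 - S1) * (pi - pi*a)) - 2*pi*(t1*a) + pi * \<bar>Re \<omega>\<bar> + pi * t1"
      using IA hc tw by linarith
    also have "\<dots> = norm A / (2*pi) + 1/pi + pi * \<bar>Re \<omega>\<bar> + (pi*S1 - pi*a*S1 - pi*a*t1)"
      using E1 by (simp add: algebra_simps)
    also have "\<dots> \<le> K - 2*c*t1" unfolding K_def using E2 E3 pi1 by linarith
    finally show ?thesis using cK True by simp
  next
    case False
    have tn: "t1 \<le> - \<bar>\<zeta>\<bar> - 1" using t1 False by simp
    have hs: "\<bar>h t1\<bar> \<le> 2" using h_small[OF tn] by (simp add: h_def)
    have "- h t1 / (2*pi) \<le> 2 / (2*pi)" by (rule divide_right_mono) (use hs in auto)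
    then have hc: "- h t1 / (2*pi) \<le> 1/pi" by simp
    have E3: "2*c*(-t1) \<le> pi*(1-2*a)*(-t1)" using c0 False by (intro mult_right_mono) auto
    have "Re (f_fun \<zeta> \<omega> (Complex t1 t2)) = - Im A / (2*pi) + - h t1 / (2*pi) - 2*pi*(t1*a) - 2*pi*(t2 * Re \<omega>) + pi * t1"
      unfolding Ref by (simp add: field_simps)
    also have "\<dots> \<le> norm A / (2*pi) + 1/pi - 2*pi*(t1*a) + pi * \<bar>Re \<omega>\<bar> + pi * t1"
      using IA hc tw by linarith
    also have "\<dots> = norm A / (2*pi) + 1/pi + pi * \<bar>Re \<omega>\<bar> - pi*(1-2*a)*(-t1)"
      by (simp add: algebra_simps)
    also have "\<dots> \<le> K - 2*c*(-t1)" unfolding K_def using E3 pi1 mult_nonneg_nonneg[OF pi_ge_zero S1] by linarith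
    finally show ?thesis using cK False by simp
  qed
qed



theorem lemma4p2:
  fixes \<zeta> :: real and \<omega> :: complex
  assumes "0 < Im \<omega>" and "Im \<omega> < 1/2"
  shows "\<exists>C>0. \<exists>c>0. \<exists>T. \<exists>b0>0. \<forall>b t1 t2.
           0 < b \<and> b < b0 \<and> T \<le> \<bar>t1\<bar> \<and> -1/2 < t2 \<and> t2 < 0 \<longrightarrow>
           norm (exp (f_fun \<zeta> \<omega> (Complex t1 t2) / (of_real b)\<^sup>2) * g_fun (Complex t1 t2))
             \<le> C * exp (- (c / b\<^sup>2) * \<bar>t1\<bar>)"
proof -
  define a where "a = Im \<omega>"
  define \<delta> where "\<delta> = min (1/4) (pi * a / 4)"
  define S1 where "S1 = \<bar>\<zeta>\<bar> + 1/\<delta>"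
  define A where "A = Li2 (- exp (2 * of_real pi * of_real \<zeta>))"
  define K where "K = norm A / (2*pi) + 1 + pi * S1 + pi * \<bar>Re \<omega>\<bar>"
  define c where "c = min (pi * a) (pi * (1 - 2*a)) / 2"
  define T where "T = max (S1 + 1) (max (\<bar>\<zeta>\<bar> + 1) (K / c))"
  have pa: "0 < pi * a" using assms by (simp add: a_def)
  have pa2: "0 < pi * (1 - 2*a)" using assms by (simp add: a_def)
  have c0: "0 < c" using pa pa2 by (auto simp: c_def)
  have \<delta>0: "0 < \<delta>" using pa by (simp add: \<delta>_def)
  have S1: "0 \<le> S1" using \<delta>0 by (simp add: S1_def)
  have main: "norm (exp (f_fun \<zeta> \<omega> (Complex t1 t2) / (of_real b)\<^sup>2) * g_fun (Complex t1 t2))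
             \<le> 2 * exp (- (c / b\<^sup>2) * \<bar>t1\<bar>)"
    if b: "0 < b" and t1: "T \<le> \<bar>t1\<bar>" and t2: "-1/2 < t2" "t2 < 0" for b t1 t2
  proof -
    have rf: "Re (f_fun \<zeta> \<omega> (Complex t1 t2)) \<le> - c * \<bar>t1\<bar>"
      using key_bound[OF assms t1[unfolded T_def K_def A_def S1_def \<delta>_def a_def c_def] t2]
      by (simp add: K_def A_def S1_def \<delta>_def a_def c_def)
    have g: "norm (g_fun (Complex t1 t2)) \<le> 2"
      by (rule g_bound) (use t1 S1 in \<open>simp add: T_def\<close>)
    have b2: "0 < b\<^sup>2" using b by simp
    have "Re (f_fun \<zeta> \<omega> (Complex t1 t2) / (of_real b)\<^sup>2) = Re (f_fun \<zeta> \<omega> (Complex t1 t2)) / b\<^sup>2"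
      by (simp add: Re_divide_of_real flip: of_real_power)
    also have "\<dots> \<le> (- c * \<bar>t1\<bar>) / b\<^sup>2" by (rule divide_right_mono[OF rf]) (use b2 in simp)
    also have "\<dots> = - (c / b\<^sup>2) * \<bar>t1\<bar>" by simp
    finally have e: "norm (exp (f_fun \<zeta> \<omega> (Complex t1 t2) / (of_real b)\<^sup>2)) \<le> exp (- (c / b\<^sup>2) * \<bar>t1\<bar>)"
      by simp
    have "norm (exp (f_fun \<zeta> \<omega> (Complex t1 t2) / (of_real b)\<^sup>2) * g_fun (Complex t1 t2))
        = norm (exp (f_fun \<zeta> \<omega> (Complex t1 t2) / (of_real b)\<^sup>2)) * norm (g_fun (Complex t1 t2))"
      by (rule norm_mult)
    also have "\<dots> \<le> exp (- (c / b\<^sup>2) * \<bar>t1\<bar>) * 2"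
      by (rule mult_mono[OF e g]) auto
    finally show ?thesis by simp
  qed
  show ?thesis
    by (rule exI[of _ 2], simp, rule exI[of _ c], use c0 in simp, rule exI[of _ T], rule exI[of _ 1])
       (use main in auto)
qed


end
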